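(* Let $N\ge1$, $K\ge2$ be integers and let $\alpha$ be a real number with $\alpha<\frac{2}{K}$. Then in $\mathcal{B}_\alpha(N,K)$ no pure strategy is weakly dominated by another pure strategy.
   Context: Fix integers $N\ge1$, $K\ge2$ and a real number $\alpha$. The Colonel Blotto game $\mathcal{B}_\alpha(N,K)$ is the two-player simultaneous-move game with players $A,B$, each with pure strategy set $S=\{s\in\{0,1,\ldots,N\}^K:\sum_{k=1}^K s_k=N\}$, in which the payoff of player $i$ at the pure profile $(s^i,s^{-i})$ is $\pi^i(s^i,s^{-i})=\sum_{k=1}^K\big(\mathbf 1[s^i_k>s^{-i}_k]+\tfrac{\alpha}{2}\mathbf 1[s^i_k=s^{-i}_k]\big)$. A pure strategy $s\in S$ is weakly dominated by a pure strategy $\hat s\in S$ if $\pi^i(s,t)\le\pi^i(\hat s,t)$ for all $t\in S$ and $\pi^i(s,t)<\pi^i(\hat s,t)$ for at least one $t\in S$. *)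

theory Defs
  imports Main "HOL.Real"
begin

text \<open>Represented as
  functions nat => nat that vanish outside {0..<K} (canonical representation).\<close>

definition strategies :: "nat \<Rightarrow> nat \<Rightarrow> (nat \<Rightarrow> nat) set" where
  "strategies N K = {s. (\<forall>k. K \<le> k \<longrightarrow> s k = 0) \<and> (\<Sum>k<K. s k) = N}"

definition payoff :: "real \<Rightarrow> nat \<Rightarrow> (nat \<Rightarrow> nat) \<Rightarrow> (nat \<Rightarrow> nat) \<Rightarrow> real" where
  "payoff \<alpha> K s t =
     (\<Sum>k<K. (if s k > t k then 1 else 0) + (if s k = t k then \<alpha> / 2 else 0))"

definition weakly_dominated ::
  "real \<Rightarrow> nat \<Rightarrow> nat \<Rightarrow> (nat \<Rightarrow> nat) \<Rightarrow> (nat \<Rightarrow> nat) \<Rightarrow> bool" where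
  "weakly_dominated \<alpha> N K s s' \<longleftrightarrow>
     (\<forall>t\<in>strategies N K. payoff \<alpha> K s t \<le> payoff \<alpha> K s' t) \<and>
     (\<exists>t\<in>strategies N K. payoff \<alpha> K s t < payoff \<alpha> K s' t)"

end

theory Submission
  imports Defs
begin

lemma exists_gt:
  assumes s: "s \<in> strategies N K" and s': "s' \<in> strategies N K" and ne: "s \<noteq> s'"
  shows "\<exists>k<K. s k > s' k"
proof (rule ccontr)
  assume "\<not> (\<exists>k<K. s k > s' k)"
  hence le: "\<forall>k<K. s k \<le> s' k" by auto
  have eq: "\<forall>k<K. s k = s' k"
  proof (rule ccontr)
    assume "\<not> (\<forall>k<K. s k = s' k)"
    then obtain k where "k < K" "s k < s' k" using le by (meson le_neq_implies_less)
    hence "(\<Sum>k<K. s k) < (\<Sum>k<K. s' k)"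
      using le by (intro sum_strict_mono_ex1) auto
    thus False using s s' by (simp add: strategies_def)
  qed
  have "s = s'"
  proof
    fix k show "s k = s' k"
      using eq s s' by (cases "k < K") (auto simp: strategies_def)
  qed
  thus False using ne by simp
qed

theorem proposition4:
  fixes N K :: nat and \<alpha> :: real
  assumes "N \<ge> 1" and "K \<ge> 2" and "\<alpha> < 2 / real K"
  shows "\<forall>s\<in>strategies N K. \<forall>s'\<in>strategies N K. \<not> weakly_dominated \<alpha> N K s s'"
proof (intro ballI notI)
  fix s s' assume s: "s \<in> strategies N K" and s': "s' \<in> strategies N K"
    and wd: "weakly_dominated \<alpha> N K s s'"
  have ne: "s \<noteq> s'" using wd by (auto simp: weakly_dominated_def)
  obtain k0 where k0: "k0 < K" "s k0 > s' k0" using exists_gt[OF s s' ne] by blast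
  define f where "f k = (if s k > s' k then 1 else 0) + (if s k = s' k then \<alpha> / 2 else 0) - \<alpha> / 2" for k
  have diff: "payoff \<alpha> K s s' - payoff \<alpha> K s' s' = (\<Sum>k<K. f k)"
    by (simp add: payoff_def f_def sum_subtractf)
  have Kpos: "real K > 0" using assms by simp
  have split: "(\<Sum>k<K. f k) = f k0 + (\<Sum>k\<in>{..<K}-{k0}. f k)"
    using k0 by (simp add: sum.remove)
  have fk0: "f k0 = 1 - \<alpha>/2" using k0 by (simp add: f_def)
  have pos: "(\<Sum>k<K. f k) > 0"
  proof (cases "\<alpha> \<ge> 0")
    case True
    have "(\<Sum>k\<in>{..<K}-{k0}. f k) \<ge> (\<Sum>k\<in>{..<K}-{k0}. - \<alpha>/2)"
      using True by (intro sum_mono) (auto simp: f_def)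
    moreover have "(\<Sum>k\<in>{..<K}-{k0}. - \<alpha>/2) = - (real K - 1) * \<alpha> / 2" using k0 by (simp add: of_nat_diff field_simps)
    moreover have "- (real K - 1) * \<alpha> / 2 = \<alpha>/2 - real K * \<alpha> / 2" by (simp add: field_simps)
    ultimately have "(\<Sum>k<K. f k) \<ge> 1 - real K * \<alpha> / 2"
      using split fk0 by (smt (verit) \<open>- (real K - 1) * \<alpha> / 2 = \<alpha>/2 - real K * \<alpha> / 2\<close>)
    moreover have "real K * \<alpha> < 2" using assms(3) Kpos by (simp add: field_simps)
    ultimately show ?thesis by linarith
  next
    case False
    have "(\<Sum>k\<in>{..<K}-{k0}. f k) \<ge> 0"
      using False by (intro sum_nonneg) (auto simp: f_def)
    thus ?thesis using split fk0 False by linarith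
  qed
  have "payoff \<alpha> K s s' \<le> payoff \<alpha> K s' s'"
    using wd s' by (auto simp: weakly_dominated_def)
  thus False using diff pos by linarith
qed

end
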